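(* Let $l<u$ be real, let $\Delta Q$ be real with $0<\Delta Q\le u-l$, and let $\epsilon\ge0$, $0\le\delta<1$ with $\frac{e^\epsilon}{1-\delta}>1$ (i.e. $\epsilon$ and $\delta$ not both zero). Let $b_0=\frac{\Delta Q}{\epsilon-\log(1-\delta)}$. Then $1\le \Delta C(b_0)<\frac{e^\epsilon}{1-\delta}$; in particular $\epsilon-\log\Delta C(b_0)-\log(1-\delta)>0$, so $f(b_0)$ is a well-defined positive number, and $f(b_0)\ge b_0$. Moreover $f(b_0)=b_0$ if and only if $\Delta Q=u-l$.
   Context: For $b>0$ and $p\in[l,u]$, $C_p(b)= 1-\frac12\left(e^{-\frac{p-l}{b}}+e^{-\frac{u-p}{b}}\right)$ (the integral $\int_l^u\frac{1}{2b}e^{-|x-p|/b}dx$), and $\Delta C(b)=\frac{C_{l+\Delta Q}(b)}{C_l(b)}$. The map $f$ is defined for $b>0$ with $\epsilon-\log\Delta C(b)-\log(1-\delta)\neq 0$ by $f(b)=\frac{\Delta Q}{\epsilon-\log\Delta C(b)-\log(1-\delta)}$. *)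

theory Defs
  imports Complex_Main
begin

text \<open>Probability mass of the Laplace(p, b) distribution on [l,u]:
  C_p(b) = 1 - (exp(-(p-l)/b) + exp(-(u-p)/b))/2.\<close>
definition Cp :: "real \<Rightarrow> real \<Rightarrow> real \<Rightarrow> real \<Rightarrow> real" where
  "Cp l u p b = 1 - (exp (- (p - l) / b) + exp (- (u - p) / b)) / 2"

definition DeltaC :: "real \<Rightarrow> real \<Rightarrow> real \<Rightarrow> real \<Rightarrow> real" where
  "DeltaC l u dQ b = Cp l u (l + dQ) b / Cp l u l b"

definition fmap :: "real \<Rightarrow> real \<Rightarrow> real \<Rightarrow> real \<Rightarrow> real \<Rightarrow> real \<Rightarrow> real" where
  "fmap l u dQ eps delta b = dQ / (eps - ln (DeltaC l u dQ b) - ln (1 - delta))"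

end

theory Submission
  imports Defs
begin

theorem lemma4p1:
  fixes l u dQ eps delta :: real
  assumes "l < u" and "0 < dQ" and "dQ \<le> u - l"
    and "0 \<le> eps" and "0 \<le> delta" and "delta < 1"
    and "exp eps / (1 - delta) > 1"
  defines "b0 \<equiv> dQ / (eps - ln (1 - delta))"
  shows "1 \<le> DeltaC l u dQ b0 \<and> DeltaC l u dQ b0 < exp eps / (1 - delta)
    \<and> eps - ln (DeltaC l u dQ b0) - ln (1 - delta) > 0
    \<and> fmap l u dQ eps delta b0 > 0
    \<and> fmap l u dQ eps delta b0 \<ge> b0
    \<and> (fmap l u dQ eps delta b0 = b0 \<longleftrightarrow> dQ = u - l)"
proof -
  define L where "L = eps - ln (1 - delta)"
  have d1: "0 < 1 - delta" using assms by simp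
  have "exp eps > 1 - delta" using assms(7) d1 by (simp add: field_simps)
  hence "ln (1 - delta) < eps" using d1 by (metis ln_exp ln_less_cancel_iff exp_gt_zero)
  hence Lpos: "L > 0" unfolding L_def by simp
  have b0: "b0 = dQ / L" unfolding b0_def L_def ..
  have bpos: "b0 > 0" using b0 Lpos assms(2) by simp
  define r where "r = exp (- L)"
  define t where "t = exp (- (u - l) / b0)"
  have dqb: "dQ / b0 = L" using b0 Lpos assms(2) by simp
  have r_eq: "r = (1 - delta) / exp eps"
    unfolding r_def L_def using d1 by (simp add: exp_diff exp_minus field_simps)
  have r0: "0 < r" and r1: "r < 1" unfolding r_def using Lpos by auto
  have t0: "0 < t" unfolding t_def by simp
  have "(u - l) / b0 \<ge> dQ / b0" using assms(3) bpos by (simp add: divide_right_mono)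
  hence "- (u - l) / b0 \<le> - L" using dqb by (smt (verit) minus_divide_left)
  hence tr: "t \<le> r" unfolding t_def r_def by simp
  have teq: "t = r \<longleftrightarrow> dQ = u - l"
  proof
    assume "t = r"
    hence "(l - u) / b0 = - L" unfolding t_def r_def using dqb by simp
    hence "(u - l) / b0 = dQ / b0" using dqb by (smt (verit) minus_divide_left)
    thus "dQ = u - l" using bpos by simp
  next
    assume "dQ = u - l"
    hence "- (u - l) / b0 = - L" using dqb by (smt (verit) minus_divide_left)
    thus "t = r" unfolding t_def r_def by simp
  qed
  have e1: "exp (- (l + dQ - l) / b0) = r" unfolding r_def using dqb by simp
  have e2: "exp (- (u - (l + dQ)) / b0) = t / r"
  proof -
    have "- (u - (l + dQ)) / b0 = - (u - l) / b0 + dQ / b0" using bpos by (simp add: field_simps)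
    thus ?thesis unfolding t_def r_def using dqb by (simp add: exp_add exp_minus field_simps)
  qed
  have t1: "t < 1" using tr r1 by simp
  have DC: "DeltaC l u dQ b0 = (2*r - r^2 - t) / (r * (1 - t))"
  proof -
    have c1: "Cp l u (l + dQ) b0 = 1 - (r + t / r) / 2" unfolding Cp_def e1 e2 ..
    have c2: "Cp l u l b0 = 1 - (1 + t) / 2" unfolding Cp_def t_def by simp
    have "(1 - (r + t / r) / 2) / (1 - (1 + t) / 2) = (2*r - r^2 - t) / (r * (1 - t))"
      using r0 t1 by (simp add: field_simps power2_eq_square)
    thus ?thesis unfolding DeltaC_def c1 c2 .
  qed
  define D where "D = DeltaC l u dQ b0"
  have den: "r * (1 - t) > 0" using r0 t1 by simp
  have D1: "1 \<le> D"
  proof -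
    have "(r - t) * (1 - r) \<ge> 0" using tr r1 by simp
    hence "r * (1 - t) \<le> 2*r - r^2 - t" by (simp add: algebra_simps power2_eq_square)
    thus ?thesis unfolding D_def DC using den by simp
  qed
  have Deq: "D = 1 \<longleftrightarrow> t = r"
  proof
    assume "D = 1"
    hence "2*r - r^2 - t = r * (1 - t)" unfolding D_def DC using den by (simp add: field_simps)
    hence "(r - t) * (1 - r) = 0" by (simp add: algebra_simps power2_eq_square)
    thus "t = r" using r1 by simp
  next
    assume "t = r"
    thus "D = 1" unfolding D_def DC using den r0 r1 by (simp add: field_simps power2_eq_square)
  qed
  have D2: "D < 1 / r"
  proof -
    have "(1 - r)^2 > 0" using r1 by simp
    hence "2*r - r^2 - t < 1 - t" by (simp add: algebra_simps power2_eq_square)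
    hence "(2*r - r^2 - t) / (r * (1 - t)) < (1 - t) / (r * (1 - t))"
      using den by (intro divide_strict_right_mono)
    moreover have "(1 - t) / (r * (1 - t)) = 1 / r" using t1 by simp
    ultimately show ?thesis unfolding D_def DC by simp
  qed
  have inv: "1 / r = exp eps / (1 - delta)" using r_eq by simp
  have Dpos: "D > 0" using D1 by simp
  have lnD: "ln D < L"
  proof -
    have "ln D < ln (1 / r)" using D2 Dpos r0 by (intro ln_less_cancel_iff[THEN iffD2]) auto
    also have "ln (1 / r) = L" unfolding r_def by (simp add: exp_minus divide_inverse)
    finally show ?thesis .
  qed
  have lnD0: "ln D \<ge> 0" using D1 by simp
  have G: "eps - ln D - ln (1 - delta) = L - ln D" unfolding L_def by simp
  have Gpos: "L - ln D > 0" using lnD by simp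
  have F: "fmap l u dQ eps delta b0 = dQ / (L - ln D)"
    unfolding fmap_def D_def[symmetric] G ..
  have Fpos: "dQ / (L - ln D) > 0" using Gpos assms(2) by simp
  have Fge: "dQ / (L - ln D) \<ge> b0" unfolding b0
    using Gpos lnD0 assms(2) Lpos by (simp add: frac_le)
  have Feq: "dQ / (L - ln D) = b0 \<longleftrightarrow> dQ = u - l"
  proof -
    have "dQ / (L - ln D) = dQ / L \<longleftrightarrow> L - ln D = L"
      using Gpos Lpos assms(2) by (simp add: field_simps)
    also have "\<dots> \<longleftrightarrow> D = 1" using Dpos by auto
    finally show ?thesis using Deq teq b0 by simp
  qed
  show ?thesis using D1 D2 inv G Gpos F Fpos Fge Feq
    unfolding D_def[symmetric] by simp
qed

end
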